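(* For any interval exchange $f\in\mathcal{E}$, either $d(f^n)$ exhibits linear growth in $n$ or $d(f^n)$ is bounded independently of $n$.
   Context: Identify $\mathbb{T}^1=\mathbb{R}/\mathbb{Z}$ with $[0,1)$. An interval exchange transformation is a bijection of $\mathbb{T}^1$ that is a translation on each piece of some partition of $[0,1)$ into finitely many half-open intervals $[a,b)$; $\mathcal{E}$ is the group of these. $d(g)$ is the number of points at which $g$ is discontinuous as a map $\mathbb{T}^1\to\mathbb{T}^1$ with the standard circle topology. Linear growth means there is $c>0$ with $d(f^n)\ge c|n|$ for all sufficiently large $|n|$ (one always has $d(f^n)\le d(f)|n|$). *)

theory Defs
  imports "HOL-Analysis.Analysis"
begin

text \<open>The circle T^1 = R/Z is identified with [0,1). Maps of the circle are
represented by functions real => real, only their values on [0,1) matter.\<close>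

definition circ :: "real set" where
  "circ = {0..<1}"

definition cdist :: "real \<Rightarrow> real \<Rightarrow> real" where
  "cdist u v = \<bar>(u - v) - of_int (round (u - v))\<bar>"

definition iet :: "(real \<Rightarrow> real) \<Rightarrow> bool" where
  "iet f \<longleftrightarrow> bij_betw f circ circ \<and>
     (\<exists>(a::nat \<Rightarrow> real) (k::nat). a 0 = 0 \<and> a k = 1 \<and> (\<forall>i<k. a i < a (Suc i)) \<and>
        (\<forall>i<k. \<exists>c. \<forall>x\<in>{a i..<a (Suc i)}. f x = x + c))"

text \<open>g is discontinuous at x (x in [0,1)) as a map T^1 -> T^1 with the circle topology:
points near x on the circle are the reals y near x taken mod 1.\<close>
definition discont_at :: "(real \<Rightarrow> real) \<Rightarrow> real \<Rightarrow> bool" where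
  "discont_at g x \<longleftrightarrow> \<not> (((\<lambda>y. cdist (g (frac y)) (g x)) \<longlongrightarrow> 0) (at x))"

definition d :: "(real \<Rightarrow> real) \<Rightarrow> nat" where
  "d g = card {x \<in> circ. discont_at g x}"

definition ipow :: "(real \<Rightarrow> real) \<Rightarrow> int \<Rightarrow> (real \<Rightarrow> real)" where
  "ipow f n = (if 0 \<le> n then f ^^ nat n else (inv_into circ f) ^^ nat (- n))"

end

theory Submission
  imports Defs
begin


lemma funpow_in: "U ` X \<subseteq> X \<Longrightarrow> x \<in> X \<Longrightarrow> (U^^n) x \<in> X"
  by (induction n) auto

lemma agree_until:
  assumes "U ` X \<subseteq> X" "\<forall>x\<in>X-D. V x = U x" "x\<in>X" "\<forall>k<n. (U^^k) x \<notin> D"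
  shows "(V^^n) x = (U^^n) x"
  using assms(4)
proof (induction n)
  case 0 show ?case by simp
next
  case (Suc n)
  hence IH: "(V^^n) x = (U^^n) x" by simp
  have "(U^^n) x \<notin> D" using Suc.prems by simp
  moreover have "(U^^n) x \<in> X" using funpow_in[OF assms(1,3)] by blast
  ultimately show ?case using IH assms(2) by simp
qed

lemma funpow_comp_apply: "(U^^a) ((U^^b) x) = (U^^(a+b)) x"
  by (simp add: funpow_add)

lemma finite_pre:
  assumes "bij_betw U X X" "finite D"
  shows "finite {x\<in>X. (U^^k) x \<in> D}"
proof -
  have inj: "inj_on (U^^k) X" using bij_betw_funpow[OF assms(1)] bij_betw_def by blast
  have inj2: "inj_on (U^^k) {x\<in>X. (U^^k) x \<in> D}" by (rule inj_on_subset[OF inj]) auto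
  moreover have "(U^^k) ` {x\<in>X. (U^^k) x \<in> D} \<subseteq> D" by auto
  ultimately have "finite ((U^^k) ` {x\<in>X. (U^^k) x \<in> D})" using assms(2) finite_subset by blast
  thus ?thesis using inj2 finite_imageD by blast
qed

lemma finite_pre_union:
  assumes "bij_betw U X X" "finite D"
  shows "finite {x\<in>X. \<exists>k<n. (U^^k) x \<in> D}"
proof -
  have "{x\<in>X. \<exists>k<n. (U^^k) x \<in> D} = (\<Union>k<n. {x\<in>X. (U^^k) x \<in> D})" by auto
  moreover have "finite (\<Union>k<n. {x\<in>X. (U^^k) x \<in> D})"
    using finite_pre[OF assms] by simp
  ultimately show ?thesis by simp
qed

lemma overlap_bound:
  assumes bij: "bij_betw U X X" and fin: "finite D"
  shows "\<exists>K. \<forall>n m. card {x\<in>X. (\<exists>k<n. (U^^k) x \<in> D) \<and> (\<exists>k<m. (U^^k) ((U^^n) x) \<in> D)} \<le> K"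
proof -
  define r where "r y = (LEAST j. j \<ge> 1 \<and> (U^^j) y \<in> D)" for y
  define R where "R = Max (r ` D)"
  show ?thesis
  proof (intro exI allI)
    fix n m
    define W where "W = {x\<in>X. (\<exists>k<n. (U^^k) x \<in> D) \<and> (\<exists>k<m. (U^^k) ((U^^n) x) \<in> D)}"
    define kx where "kx x = (GREATEST k. k < n \<and> (U^^k) x \<in> D)" for x
    define \<phi> where "\<phi> x = ((U^^kx x) x, n - kx x)" for x
    have props: "kx x < n \<and> (U^^kx x) x \<in> D \<and> (\<forall>j. kx x < j \<and> j < n \<longrightarrow> (U^^j) x \<notin> D)"
      if "x \<in> W" for x
    proof -
      from that obtain k where k: "k < n" "(U^^k) x \<in> D" unfolding W_def by blast
      have bnd: "\<forall>y. y < n \<and> (U^^y) x \<in> D \<longrightarrow> y \<le> n" by auto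
      have 1: "kx x < n \<and> (U^^kx x) x \<in> D"
        unfolding kx_def using GreatestI_nat[of "\<lambda>k. k < n \<and> (U^^k) x \<in> D" k n] k by auto
      have 2: "\<forall>j. kx x < j \<and> j < n \<longrightarrow> (U^^j) x \<notin> D"
        unfolding kx_def using Greatest_le_nat[of "\<lambda>k. k < n \<and> (U^^k) x \<in> D" _ n]
        by (meson leD less_imp_le)
      from 1 2 show ?thesis by blast
    qed
    have inj: "inj_on \<phi> W"
    proof (rule inj_onI)
      fix x x' assume xw: "x \<in> W" "x' \<in> W" and eq: "\<phi> x = \<phi> x'"
      have "kx x = kx x'" using eq props[OF xw(1)] props[OF xw(2)] unfolding \<phi>_def by auto
      hence "(U^^kx x) x = (U^^kx x) x'" using eq unfolding \<phi>_def by auto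
      moreover have "inj_on (U^^kx x) X" using bij_betw_funpow[OF bij] bij_betw_def by blast
      moreover have "x \<in> X" "x' \<in> X" using xw unfolding W_def by auto
      ultimately show "x = x'" by (meson inj_onD)
    qed
    have img: "\<phi> ` W \<subseteq> D \<times> {1..R}"
    proof
      fix p assume "p \<in> \<phi> ` W"
      then obtain x where xw: "x \<in> W" and p: "p = \<phi> x" by blast
      define y where "y = (U^^kx x) x"
      have P: "kx x < n" "y \<in> D" "\<forall>j. kx x < j \<and> j < n \<longrightarrow> (U^^j) x \<notin> D"
        using props[OF xw] y_def by auto
      obtain k' where k': "k' < m" "(U^^k') ((U^^n) x) \<in> D" using xw unfolding W_def by blast
      have "(U^^(k' + (n - kx x))) y = (U^^k') ((U^^n) x)"
        unfolding y_def funpow_comp_apply using P(1) by (simp add: algebra_simps)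
      hence ex: "k' + (n - kx x) \<ge> 1 \<and> (U^^(k' + (n - kx x))) y \<in> D" using k' P(1) by simp
      have ry: "r y \<ge> 1 \<and> (U^^r y) y \<in> D"
        unfolding r_def using LeastI_ex[of "\<lambda>j. j \<ge> 1 \<and> (U^^j) y \<in> D"] ex by blast
      have "n - kx x \<le> r y"
      proof (rule ccontr)
        assume "\<not> ?thesis"
        hence "kx x < kx x + r y \<and> kx x + r y < n" using ry by auto
        hence "(U^^(kx x + r y)) x \<notin> D" using P(3) by blast
        moreover have "(U^^(kx x + r y)) x = (U^^r y) y"
          unfolding y_def funpow_comp_apply by (simp add: add.commute)
        ultimately show False using ry by simp
      qed
      moreover have "r y \<le> R" unfolding R_def using P(2) fin by simp
      ultimately show "p \<in> D \<times> {1..R}" using p P unfolding \<phi>_def y_def by auto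
    qed
    have "card W = card (\<phi> ` W)" using card_image[OF inj] by simp
    also have "\<dots> \<le> card (D \<times> {1..R})" using img fin by (intro card_mono) auto
    finally show "card W \<le> card D * R" by (simp add: card_cartesian_product)
  qed
qed



lemma superadd_dichotomy:
  fixes c :: "nat \<Rightarrow> nat"
  assumes sa: "\<And>n m. c n + c m \<le> c (n+m) + K"
  shows "(\<exists>n0\<ge>1. \<forall>n\<ge>2*n0. real n / (2*n0) \<le> c n) \<or> (\<exists>B. \<forall>n. c n \<le> B)"
proof (cases "\<forall>n. c n \<le> K")
  case True thus ?thesis by blast
next
  case False
  then obtain n0 where n0: "c n0 > K" by (auto simp: not_le)
  have "n0 \<ge> 1"
  proof (rule ccontr)
    assume "\<not> n0 \<ge> 1" hence "n0 = 0" by simp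
    with sa[of 0 0] n0 show False by simp
  qed
  have ind: "q * c n0 + c r \<le> c (q*n0 + r) + q*K" for q r
  proof (induction q)
    case 0 show ?case by simp
  next
    case (Suc q)
    have "c n0 + c (q*n0 + r) \<le> c (n0 + (q*n0+r)) + K" by (rule sa)
    thus ?case using Suc.IH by (simp add: algebra_simps)
  qed
  have "\<forall>n\<ge>2*n0. real n / (2*n0) \<le> c n"
  proof (intro allI impI)
    fix n assume n: "n \<ge> 2*n0"
    define q where "q = n div n0"
    define r where "r = n mod n0"
    have nq: "n = q*n0 + r" unfolding q_def r_def by simp
    have rl: "r < n0" unfolding r_def using \<open>n0\<ge>1\<close> by simp
    have "q \<ge> 2" unfolding q_def using div_le_mono[OF n, of n0] \<open>n0\<ge>1\<close> by simp
    have "q * (K+1) \<le> q * c n0" using n0 mult_le_mono2[of "K+1" "c n0" q] by simp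
    also have "\<dots> \<le> c n + q*K" using ind[of q r] nq by simp
    finally have qc: "q \<le> c n" by (simp add: algebra_simps)
    have "n < (q+1)*n0" using nq rl by simp
    moreover have "(q+1)*n0 \<le> (2*q)*n0" using \<open>q\<ge>2\<close> by (intro mult_le_mono1) simp
    ultimately have "n \<le> (2*q)*n0" by linarith
    hence "n \<le> q * (2*n0)" by (simp add: mult.commute mult.left_commute)
    hence "real n \<le> real (q * (2*n0))" by (simp only: of_nat_le_iff)
    hence "real n \<le> real q * (2*n0)" by simp
    hence "real n / (2*n0) \<le> real q" using \<open>n0\<ge>1\<close> by (simp add: divide_le_eq)
    thus "real n / (2*n0) \<le> c n" using qc by linarith
  qed
  thus ?thesis using \<open>n0\<ge>1\<close> by blast
qed

lemma core:
  assumes bT: "bij_betw T X X" and bS: "bij_betw S X X" and fin: "finite D"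
    and agree: "\<forall>x\<in>X-D. S x = T x"
  shows "(\<exists>n0\<ge>1. \<forall>n\<ge>2*n0. real n / (2*n0) \<le> card {x\<in>X. (S^^n) x \<noteq> (T^^n) x})
       \<or> (\<exists>B. \<forall>n. card {x\<in>X. (S^^n) x \<noteq> (T^^n) x} \<le> B)"
proof -
  define E where "E n = {x\<in>X. (S^^n) x \<noteq> (T^^n) x}" for n
  have TX: "T ` X \<subseteq> X" using bT unfolding bij_betw_def by blast
  have SX: "S ` X \<subseteq> X" using bS unfolding bij_betw_def by blast
  have agree': "\<forall>x\<in>X-D. T x = S x"
  proof
    fix x assume "x \<in> X-D" thus "T x = S x" using agree by simp
  qed
  have ET: "E n \<subseteq> {x\<in>X. \<exists>k<n. (T^^k) x \<in> D}" for n
  proof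
    fix x assume x: "x \<in> E n"
    hence "x \<in> X" unfolding E_def by simp
    show "x \<in> {x\<in>X. \<exists>k<n. (T^^k) x \<in> D}"
    proof (rule ccontr)
      assume "\<not> ?thesis"
      hence "\<forall>k<n. (T^^k) x \<notin> D" using \<open>x\<in>X\<close> by simp
      hence "(S^^n) x = (T^^n) x" using agree_until[OF TX agree \<open>x\<in>X\<close>] by simp
      thus False using x unfolding E_def by simp
    qed
  qed
  have ES: "E n \<subseteq> {x\<in>X. \<exists>k<n. (S^^k) x \<in> D}" for n
  proof
    fix x assume x: "x \<in> E n"
    hence "x \<in> X" unfolding E_def by simp
    show "x \<in> {x\<in>X. \<exists>k<n. (S^^k) x \<in> D}"
    proof (rule ccontr)
      assume "\<not> ?thesis"
      hence "\<forall>k<n. (S^^k) x \<notin> D" using \<open>x\<in>X\<close> by simp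
      hence "(T^^n) x = (S^^n) x" using agree_until[OF SX agree' \<open>x\<in>X\<close>] by simp
      thus False using x unfolding E_def by simp
    qed
  qed
  have finE: "finite (E n)" for n
    by (rule finite_subset[OF ET finite_pre_union[OF bT fin]])
  obtain KT where KT: "\<And>n m. card {x\<in>X. (\<exists>k<n. (T^^k) x \<in> D) \<and> (\<exists>k<m. (T^^k) ((T^^n) x) \<in> D)} \<le> KT"
    using overlap_bound[OF bT fin] by blast
  obtain KS where KS: "\<And>n m. card {x\<in>X. (\<exists>k<n. (S^^k) x \<in> D) \<and> (\<exists>k<m. (S^^k) ((S^^n) x) \<in> D)} \<le> KS"
    using overlap_bound[OF bS fin] by blast
  have sa: "card (E n) + card (E m) \<le> card (E (n+m)) + (2*KT + KS)" for n m
  proof -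
    define A1 where "A1 = {x\<in>X. x \<notin> E n \<and> (T^^n) x \<in> E m}"
    define A2 where "A2 = {x\<in>E n. (T^^n) x \<notin> E m \<and> (S^^n) x \<notin> E m}"
    define OT where "OT = {x\<in>E n. (T^^n) x \<in> E m}"
    define OS where "OS = {x\<in>E n. (S^^n) x \<in> E m}"
    define P where "P = {x\<in>X. (T^^n) x \<in> E m}"
    have injTn: "inj_on (T^^n) X" using bij_betw_funpow[OF bT] bij_betw_def by blast
    have A1s: "A1 \<subseteq> E (n+m)"
    proof
      fix x assume x: "x \<in> A1"
      hence xX: "x \<in> X" and eq: "(S^^n) x = (T^^n) x" and Em: "(T^^n) x \<in> E m"
        unfolding A1_def E_def by auto
      have "(S^^(n+m)) x = (S^^m) ((T^^n) x)" using eq funpow_comp_apply[where U=S and a=m and b=n and x=x] by (simp add: add.commute)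
      moreover have "(T^^(n+m)) x = (T^^m) ((T^^n) x)" using funpow_comp_apply[where U=T and a=m and b=n and x=x] by (simp add: add.commute)
      ultimately show "x \<in> E (n+m)" using Em xX unfolding E_def by simp
    qed
    have A2s: "A2 \<subseteq> E (n+m)"
    proof
      fix x assume x: "x \<in> A2"
      hence xX: "x \<in> X" and ne: "(S^^n) x \<noteq> (T^^n) x" and u: "(S^^n) x \<notin> E m"
        and v: "(T^^n) x \<notin> E m"
        unfolding A2_def E_def by auto
      have uX: "(S^^n) x \<in> X" using funpow_in[OF SX xX] .
      have vX: "(T^^n) x \<in> X" using funpow_in[OF TX xX] .
      have su: "(S^^m) ((S^^n) x) = (T^^m) ((S^^n) x)" using u uX unfolding E_def by simp
      have injTm: "inj_on (T^^m) X" using bij_betw_funpow[OF bT] bij_betw_def by blast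
      have "(T^^m) ((S^^n) x) \<noteq> (T^^m) ((T^^n) x)" using inj_onD[OF injTm _ uX vX] ne by blast
      moreover have "(S^^(n+m)) x = (S^^m) ((S^^n) x)" using funpow_comp_apply[where U=S and a=m and b=n and x=x] by (simp add: add.commute)
      moreover have "(T^^(n+m)) x = (T^^m) ((T^^n) x)" using funpow_comp_apply[where U=T and a=m and b=n and x=x] by (simp add: add.commute)
      ultimately show "x \<in> E (n+m)" using su xX unfolding E_def by simp
    qed
    have disj: "A1 \<inter> A2 = {}" unfolding A1_def A2_def by auto
    have finA1: "finite A1" using finE[of "n+m"] A1s finite_subset by blast
    have finA2: "finite A2" using finE[of "n+m"] A2s finite_subset by blast
    have c1: "card A1 + card A2 \<le> card (E (n+m))"
    proof -
      have "card A1 + card A2 = card (A1 \<union> A2)" using card_Un_disjoint[OF finA1 finA2 disj] by simp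
      also have "\<dots> \<le> card (E (n+m))" using A1s A2s finE by (intro card_mono) auto
      finally show ?thesis .
    qed
    have bijP: "bij_betw (T^^n) P (E m)"
    proof -
      have "inj_on (T^^n) P" by (rule inj_on_subset[OF injTn]) (auto simp: P_def)
      moreover have "(T^^n) ` P = E m"
      proof
        show "(T^^n) ` P \<subseteq> E m" unfolding P_def by auto
        show "E m \<subseteq> (T^^n) ` P"
        proof
          fix y assume y: "y \<in> E m"
          hence "y \<in> X" unfolding E_def by simp
          moreover have "(T^^n) ` X = X" using bij_betw_funpow[OF bT] unfolding bij_betw_def by blast
          ultimately have "y \<in> (T^^n) ` X" by simp
          then obtain x where "x \<in> X" "y = (T^^n) x" by blast
          thus "y \<in> (T^^n) ` P" using y unfolding P_def by blast
        qed
      qed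
      ultimately show ?thesis unfolding bij_betw_def by blast
    qed
    have c2: "card (E m) \<le> card A1 + card OT"
    proof -
      have "card (E m) = card P" using bij_betw_same_card[OF bijP] by simp
      also have "\<dots> \<le> card (A1 \<union> OT)"
        using finA1 finE[of n] by (intro card_mono) (auto simp: P_def A1_def OT_def)
      also have "\<dots> \<le> card A1 + card OT" by (rule card_Un_le)
      finally show ?thesis .
    qed
    have c3: "card (E n) \<le> card A2 + card OT + card OS"
    proof -
      have "card (E n) \<le> card (A2 \<union> OT \<union> OS)"
        using finE[of n] by (intro card_mono) (auto simp: A2_def OT_def OS_def)
      also have "\<dots> \<le> card (A2 \<union> OT) + card OS" by (rule card_Un_le)
      also have "\<dots> \<le> card A2 + card OT + card OS" using card_Un_le[of A2 OT] by simp
      finally show ?thesis .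
    qed
    have "OT \<subseteq> {x\<in>X. (\<exists>k<n. (T^^k) x \<in> D) \<and> (\<exists>k<m. (T^^k) ((T^^n) x) \<in> D)}"
      unfolding OT_def using ET by blast
    moreover have "finite {x\<in>X. (\<exists>k<n. (T^^k) x \<in> D) \<and> (\<exists>k<m. (T^^k) ((T^^n) x) \<in> D)}"
      by (rule finite_subset[OF _ finite_pre_union[OF bT fin, of n]]) auto
    ultimately have oT: "card OT \<le> KT" using KT[of n m] card_mono le_trans by blast
    have "OS \<subseteq> {x\<in>X. (\<exists>k<n. (S^^k) x \<in> D) \<and> (\<exists>k<m. (S^^k) ((S^^n) x) \<in> D)}"
      unfolding OS_def using ES by blast
    moreover have "finite {x\<in>X. (\<exists>k<n. (S^^k) x \<in> D) \<and> (\<exists>k<m. (S^^k) ((S^^n) x) \<in> D)}"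
      by (rule finite_subset[OF _ finite_pre_union[OF bS fin, of n]]) auto
    ultimately have oS: "card OS \<le> KS" using KS[of n m] card_mono le_trans by blast
    show ?thesis using c1 c2 c3 oT oS by linarith
  qed
  show ?thesis using superadd_dichotomy[of "\<lambda>n. card (E n)", OF sa] unfolding E_def by simp
qed



definition hi :: "real \<Rightarrow> real" where "hi x = (if x = 0 then 1 else x)"

definition germ :: "(real\<Rightarrow>real) \<Rightarrow> (real\<Rightarrow>real) \<Rightarrow> (real\<Rightarrow>real) \<Rightarrow> bool" where
 "germ g R L \<longleftrightarrow> (\<forall>x\<in>circ. R x \<in> circ \<and> L x \<in> circ \<and>
     (\<exists>e>0. \<forall>t. 0 \<le> t \<and> t < e \<longrightarrow> g (x+t) = R x + t) \<and>
     (\<exists>e>0. \<forall>t. 0 < t \<and> t < e \<longrightarrow> g (hi x - t) = hi (L x) - t))"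

lemma hi_circ: "x \<in> circ \<Longrightarrow> 0 < hi x \<and> hi x \<le> 1"
  by (auto simp: hi_def circ_def)

lemma germ_id: "germ id id id"
  unfolding germ_def by (auto intro!: exI[of _ 1])

lemma germ_comp:
  assumes g: "germ g R1 L1" and h: "germ h R2 L2"
  shows "germ (h \<circ> g) (R2 \<circ> R1) (L2 \<circ> L1)"
  unfolding germ_def
proof (intro ballI conjI)
  fix x assume x: "x \<in> circ"
  have gx: "R1 x \<in> circ" "L1 x \<in> circ" using g x unfolding germ_def by auto
  show "(R2 \<circ> R1) x \<in> circ" "(L2 \<circ> L1) x \<in> circ" using h gx unfolding germ_def by auto
  obtain e1 where e1: "e1 > 0" "\<forall>t. 0 \<le> t \<and> t < e1 \<longrightarrow> g (x+t) = R1 x + t"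
    using g x unfolding germ_def by blast
  obtain e2 where e2: "e2 > 0" "\<forall>t. 0 \<le> t \<and> t < e2 \<longrightarrow> h (R1 x+t) = R2 (R1 x) + t"
    using h gx unfolding germ_def by blast
  show "\<exists>e>0. \<forall>t. 0 \<le> t \<and> t < e \<longrightarrow> (h \<circ> g) (x+t) = (R2 \<circ> R1) x + t"
    by (rule exI[of _ "min e1 e2"]) (use e1 e2 in auto)
  obtain d1 where d1: "d1 > 0" "\<forall>t. 0 < t \<and> t < d1 \<longrightarrow> g (hi x - t) = hi (L1 x) - t"
    using g x unfolding germ_def by blast
  obtain d2 where d2: "d2 > 0" "\<forall>t. 0 < t \<and> t < d2 \<longrightarrow> h (hi (L1 x) - t) = hi (L2 (L1 x)) - t"
    using h gx unfolding germ_def by blast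
  show "\<exists>e>0. \<forall>t. 0 < t \<and> t < e \<longrightarrow> (h \<circ> g) (hi x - t) = hi ((L2 \<circ> L1) x) - t"
    by (rule exI[of _ "min d1 d2"]) (use d1 d2 in auto)
qed

lemma germ_pow: "germ g R L \<Longrightarrow> germ (g^^n) (R^^n) (L^^n)"
  by (induction n) (auto simp: germ_id germ_comp)

lemma dist_int_lower:
  fixes w0 t \<delta> :: real and m :: int
  assumes "w0 \<noteq> 0" "\<bar>w0\<bar> < 1" "0 < t" "t < \<delta>" "\<delta> \<le> \<bar>w0\<bar>/2" "\<delta> \<le> (1 - \<bar>w0\<bar>)/2"
  shows "\<delta> \<le> \<bar>w0 - t - of_int m\<bar>"
proof -
  consider "m \<le> -1" | "m = 0" | "m \<ge> 1" by linarith
  thus ?thesis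
  proof cases
    case 1 hence "real_of_int m \<le> -1" by simp
    thus ?thesis using assms by (auto simp: abs_if split: if_splits)
  next
    case 2 thus ?thesis using assms by (auto simp: abs_if split: if_splits)
  next
    case 3 hence "real_of_int m \<ge> 1" by simp
    thus ?thesis using assms by (auto simp: abs_if split: if_splits)
  qed
qed

lemma cdist_le: "cdist u v \<le> \<bar>u - v - of_int m\<bar>"
  unfolding cdist_def by (rule round_diff_minimal)

lemma frac_left:
  assumes x: "x \<in> circ" and t: "0 < t" "t < hi x"
  shows "frac (x - t) = hi x - t"
proof (cases "x = 0")
  case True
  have "t < 1" using t True by (simp add: hi_def)
  hence fl: "\<lfloor>x - t\<rfloor> = -1" using True t by (simp add: floor_eq_iff)
  hence "frac (x - t) = (x - t) + 1" unfolding frac_def by simp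
  thus ?thesis using True by (simp add: hi_def)
next
  case False
  hence "hi x = x" by (simp add: hi_def)
  moreover have "frac (x - t) = x - t" using x t \<open>hi x = x\<close> unfolding circ_def by (simp add: frac_eq)
  ultimately show ?thesis by simp
qed

lemma germ_discont:
  assumes G: "germ g R L" and x: "x \<in> circ"
  shows "discont_at g x \<longleftrightarrow> L x \<noteq> R x"
proof -
  have RL: "R x \<in> circ" "L x \<in> circ" using G x unfolding germ_def by auto
  obtain eR where eR: "eR > 0" "\<forall>t. 0 \<le> t \<and> t < eR \<longrightarrow> g (x+t) = R x + t"
    using G x unfolding germ_def by blast
  obtain eL where eL: "eL > 0" "\<forall>t. 0 < t \<and> t < eL \<longrightarrow> g (hi x - t) = hi (L x) - t"
    using G x unfolding germ_def by blast
  have gx: "g x = R x" using eR by (metis add.right_neutral order_refl)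
  have hx: "0 < hi x" "hi x \<le> 1" using hi_circ[OF x] by auto
  have x01: "0 \<le> x" "x < 1" using x unfolding circ_def by auto
  show ?thesis
  proof
    assume dc: "discont_at g x"
    show "L x \<noteq> R x"
    proof
      assume eq: "L x = R x"
      define d where "d = min (min eR eL) (min (1 - x) (hi x))"
      have d0: "d > 0" unfolding d_def using eR eL hx x01 by auto
      have bound: "cdist (g (frac y)) (g x) \<le> \<bar>y - x\<bar>" if y: "y \<noteq> x" "dist y x < d" for y
      proof (cases "y > x")
        case True
        define t where "t = y - x"
        have t: "0 < t" "t < eR" "t < 1 - x" using True y unfolding t_def d_def dist_real_def by auto
        have "frac y = y" using t x01 unfolding t_def by (simp add: frac_eq)
        hence "g (frac y) = R x + t" using eR t unfolding t_def by (metis add.commute diff_add_cancel less_eq_real_def)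
        hence "cdist (g (frac y)) (g x) \<le> \<bar>(R x + t) - R x - of_int 0\<bar>" using gx cdist_le by metis
        thus ?thesis using t unfolding t_def by simp
      next
        case False
        define t where "t = x - y"
        have t: "0 < t" "t < eL" "t < hi x" using False y unfolding t_def d_def dist_real_def by auto
        have "frac y = hi x - t" using frac_left[OF x t(1) t(3)] unfolding t_def by simp
        hence gy: "g (frac y) = hi (R x) - t" using eL t eq by simp
        define m :: int where "m = (if R x = 0 then 1 else 0)"
        have "hi (R x) - t - R x - of_int m = - t" unfolding m_def hi_def by simp
        hence "cdist (g (frac y)) (g x) \<le> \<bar>- t\<bar>" using gy gx cdist_le[of "hi (R x) - t" "R x" m] by simp
        thus ?thesis using t unfolding t_def by simp
      qed
      have "((\<lambda>y. cdist (g (frac y)) (g x)) \<longlongrightarrow> 0) (at x)"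
      proof (rule Lim_null_comparison)
        show "\<forall>\<^sub>F y in at x. norm (cdist (g (frac y)) (g x)) \<le> \<bar>y - x\<bar>"
          unfolding eventually_at using d0 bound by (auto simp: cdist_def intro!: exI[of _ d])
        show "((\<lambda>y. \<bar>y - x\<bar>) \<longlongrightarrow> 0) (at x)"
          by (auto intro!: tendsto_eq_intros)
      qed
      thus False using dc unfolding discont_at_def by simp
    qed
  next
    assume ne: "L x \<noteq> R x"
    define w0 where "w0 = hi (L x) - R x"
    have hL: "0 < hi (L x)" "hi (L x) \<le> 1" using hi_circ[OF RL(2)] by auto
    have R01: "0 \<le> R x" "R x < 1" using RL(1) unfolding circ_def by auto
    have w0a: "w0 \<noteq> 0"
    proof
      assume "w0 = 0" hence "hi (L x) = R x" unfolding w0_def by simp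
      thus False using ne R01 by (auto simp: hi_def split: if_splits)
    qed
    have w0b: "\<bar>w0\<bar> < 1"
    proof -
      have "w0 \<noteq> 1"
      proof
        assume "w0 = 1" hence "hi (L x) = 1" "R x = 0" unfolding w0_def using hL R01 by auto
        hence "L x = 0" using RL(2) unfolding hi_def circ_def by (auto split: if_splits)
        thus False using ne \<open>R x = 0\<close> by simp
      qed
      thus ?thesis unfolding w0_def using hL R01 by auto
    qed
    define \<delta> where "\<delta> = min \<bar>w0\<bar> (1 - \<bar>w0\<bar>) / 2"
    have \<delta>0: "\<delta> > 0" unfolding \<delta>_def using w0a w0b by auto
    show "discont_at g x"
      unfolding discont_at_def
    proof
      assume lim: "((\<lambda>y. cdist (g (frac y)) (g x)) \<longlongrightarrow> 0) (at x)"
      have "\<forall>\<^sub>F y in at x. dist (cdist (g (frac y)) (g x)) 0 < \<delta>"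
        using tendstoD[OF lim \<delta>0] .
      then obtain d where d: "d > 0" "\<forall>y. y \<noteq> x \<and> dist y x < d \<longrightarrow> dist (cdist (g (frac y)) (g x)) 0 < \<delta>"
        unfolding eventually_at by auto
      define t where "t = min (min d eL) (min \<delta> (hi x)) / 2"
      have t: "0 < t" "t < d" "t < eL" "t < \<delta>" "t < hi x"
        unfolding t_def using d eL \<delta>0 hx by auto
      have "dist (cdist (g (frac (x - t))) (g x)) 0 < \<delta>" using d t by (auto simp: dist_real_def)
      moreover have "g (frac (x - t)) = hi (L x) - t" using frac_left[OF x t(1) t(5)] eL t by simp
      ultimately have lt: "cdist (hi (L x) - t) (R x) < \<delta>" using gx by (simp add: cdist_def dist_real_def)
      have "\<delta> \<le> \<bar>w0 - t - of_int (round (w0 - t))\<bar>"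
        by (rule dist_int_lower) (use w0a w0b t \<delta>_def in auto)
      moreover have "cdist (hi (L x) - t) (R x) = \<bar>w0 - t - of_int (round (w0 - t))\<bar>"
        unfolding cdist_def w0_def by (simp add: algebra_simps)
      ultimately show False using lt by simp
    qed
  qed
qed



lemma piece_right:
  fixes a :: "nat \<Rightarrow> real"
  assumes "\<forall>i<k. a i < a (Suc i)" "a 0 \<le> x" "x < a k"
  shows "\<exists>i<k. a i \<le> x \<and> x < a (Suc i)"
  using assms
proof (induction k)
  case 0 thus ?case by simp
next
  case (Suc k)
  show ?case
  proof (cases "x < a k")
    case True
    then obtain i where "i<k" "a i \<le> x \<and> x < a (Suc i)" using Suc by auto
    thus ?thesis by (intro exI[of _ i]) auto
  next
    case False thus ?thesis using Suc.prems by (intro exI[of _ k]) auto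
  qed
qed

lemma piece_left:
  fixes a :: "nat \<Rightarrow> real"
  assumes "\<forall>i<k. a i < a (Suc i)" "a 0 < x" "x \<le> a k"
  shows "\<exists>i<k. a i < x \<and> x \<le> a (Suc i)"
  using assms
proof (induction k)
  case 0 thus ?case by simp
next
  case (Suc k)
  show ?case
  proof (cases "x \<le> a k")
    case True
    then obtain i where "i<k" "a i < x \<and> x \<le> a (Suc i)" using Suc by auto
    thus ?thesis by (intro exI[of _ i]) auto
  next
    case False thus ?thesis using Suc.prems by (intro exI[of _ k]) auto
  qed
qed

lemma a_nonneg:
  fixes a :: "nat \<Rightarrow> real"
  assumes "a 0 = 0" "\<forall>i<k. a i < a (Suc i)"
  shows "i \<le> k \<Longrightarrow> a i \<ge> 0"
proof (induction i)
  case 0 thus ?case using assms by simp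
next
  case (Suc i)
  hence "a i < a (Suc i)" "0 \<le> a i" using assms(2) by auto
  thus ?case by simp
qed

lemma bij_from_agree:
  assumes bT: "bij_betw T X X" and inj: "inj_on S X" and SX: "S ` X \<subseteq> X" and fin: "finite D"
    and agree: "\<forall>x\<in>X-D. S x = T x"
  shows "bij_betw S X X"
proof -
  define D' where "D' = D \<inter> X"
  have finD': "finite D'" using fin unfolding D'_def by simp
  have injT: "inj_on T X" and TX: "T ` X = X" using bT unfolding bij_betw_def by auto
  have "S ` (X - D') = T ` (X - D')" using agree unfolding D'_def by (intro image_cong) auto
  also have "T ` (X - D') = X - T ` D'"
    using injT TX unfolding D'_def by (auto simp: inj_on_image_set_diff)
  finally have S1: "S ` (X - D') = X - T ` D'" .
  have "S ` D' \<inter> S ` (X - D') = {}"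
    using inj unfolding D'_def inj_on_def by auto
  moreover have "S ` D' \<subseteq> X" using SX unfolding D'_def by auto
  ultimately have sub: "S ` D' \<subseteq> T ` D'" using S1 by auto
  have "card (S ` D') = card D'" using inj_on_subset[OF inj] unfolding D'_def by (intro card_image) auto
  moreover have "card (T ` D') = card D'" using inj_on_subset[OF injT] unfolding D'_def by (intro card_image) auto
  ultimately have "S ` D' = T ` D'" using sub finD' by (intro card_subset_eq) auto
  moreover have "X = (X - D') \<union> D'" unfolding D'_def by auto
  hence "S ` X = S ` (X - D') \<union> S ` D'" by (metis image_Un)
  moreover have "T ` D' \<subseteq> X" using TX unfolding D'_def by auto
  ultimately have "S ` X = X" using S1 by auto
  thus ?thesis using inj unfolding bij_betw_def by simp
qed

lemma iet_germ:
  assumes f: "iet f"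
  shows "\<exists>S D. finite D \<and> germ f f S \<and> bij_betw S circ circ \<and> (\<forall>x\<in>circ - D. S x = f x)"
proof -
  have bf: "bij_betw f circ circ" using f unfolding iet_def by simp
  hence injf: "inj_on f circ" and fc: "f ` circ = circ" unfolding bij_betw_def by auto
  have fin_c: "\<And>z. z \<in> circ \<Longrightarrow> f z \<in> circ" using fc by auto
  obtain a :: "nat \<Rightarrow> real" and k where a0: "a 0 = 0" and ak: "a k = 1"
    and mono: "\<forall>i<k. a i < a (Suc i)"
    and pcs: "\<forall>i<k. \<exists>c. \<forall>x\<in>{a i..<a (Suc i)}. f x = x + c"
    using f unfolding iet_def by blast
  have right: "\<exists>e>0. \<forall>t. 0 \<le> t \<and> t < e \<longrightarrow> f (x+t) = f x + t" if x: "x \<in> circ" for x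
  proof -
    from x have "a 0 \<le> x" "x < a k" using a0 ak unfolding circ_def by auto
    then obtain i where i: "i<k" "a i \<le> x" "x < a (Suc i)" using piece_right[OF mono] by blast
    obtain c where c: "\<forall>z\<in>{a i..<a (Suc i)}. f z = z + c" using pcs i(1) by blast
    show ?thesis
    proof (intro exI[of _ "a (Suc i) - x"] conjI allI impI)
      show "a (Suc i) - x > 0" using i by simp
      fix t assume "0 \<le> t \<and> t < a (Suc i) - x"
      hence "f (x+t) = x + t + c" "f x = x + c" using c i by auto
      thus "f (x+t) = f x + t" by simp
    qed
  qed
  have left: "\<exists>s. s \<in> circ \<and> (\<exists>e>0. \<forall>t. 0 < t \<and> t < e \<longrightarrow> f (hi x - t) = hi s - t)"
    if x: "x \<in> circ" for x
  proof -
    define y where "y = hi x"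
    have y: "0 < y" "y \<le> 1" using hi_circ[OF x] unfolding y_def by auto
    then obtain i where i: "i<k" "a i < y" "y \<le> a (Suc i)" using piece_left[OF mono] a0 ak by auto
    obtain c where c: "\<forall>z\<in>{a i..<a (Suc i)}. f z = z + c" using pcs i(1) by blast
    have ai0: "a i \<ge> 0" using a_nonneg[OF a0 mono, of i] i by simp
    define e where "e = y - a i"
    have e0: "e > 0" unfolding e_def using i by simp
    have fe: "f (y - t) = (y + c) - t" if "0 < t" "t < e" for t
      using c that i unfolding e_def by auto
    have inc: "y - t \<in> circ" if "0 < t" "t < e" for t
      using that y ai0 unfolding e_def circ_def by auto
    define L where "L = y + c"
    have Lr: "0 \<le> L - t \<and> L - t < 1" if "0 < t" "t < e" for t
      using fin_c[OF inc[OF that]] fe[OF that] unfolding circ_def L_def by auto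
    have Lpos: "L > 0" using Lr[of "e/2"] e0 by auto
    have Lle: "L \<le> 1"
    proof (rule ccontr)
      assume "\<not> L \<le> 1"
      define t where "t = min e (L - 1) / 2"
      have "0 < t" "t < e" "t < L - 1" unfolding t_def using e0 \<open>\<not> L \<le> 1\<close> by auto
      thus False using Lr[of t] by auto
    qed
    define s where "s = (if L = 1 then 0 else L)"
    have s: "s \<in> circ" "hi s = L" using Lpos Lle unfolding s_def circ_def hi_def by auto
    show ?thesis
      by (rule exI[of _ s], rule conjI[OF s(1)], rule exI[of _ e]) (use e0 fe s(2) L_def y_def in auto)
  qed
  define S where "S x = (SOME s. s \<in> circ \<and> (\<exists>e>0. \<forall>t. 0 < t \<and> t < e \<longrightarrow> f (hi x - t) = hi s - t))" for x
  have Sprop: "S x \<in> circ \<and> (\<exists>e>0. \<forall>t. 0 < t \<and> t < e \<longrightarrow> f (hi x - t) = hi (S x) - t)"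
    if "x \<in> circ" for x
    unfolding S_def using someI_ex[OF left[OF that]] .
  have G: "germ f f S" unfolding germ_def using Sprop right fin_c by blast
  define D where "D = a ` {..k}"
  have finD: "finite D" unfolding D_def by simp
  have agree: "\<forall>x\<in>circ - D. S x = f x"
  proof
    fix x assume xd: "x \<in> circ - D"
    hence x: "x \<in> circ" by simp
    from x have "a 0 \<le> x" "x < a k" using a0 ak unfolding circ_def by auto
    then obtain i where i: "i<k" "a i \<le> x" "x < a (Suc i)" using piece_right[OF mono] by blast
    have "a i \<noteq> x" using xd i(1) unfolding D_def by auto
    hence ai: "a i < x" using i by simp
    have "x \<noteq> 0" using xd a0 unfolding D_def by auto
    hence hx: "hi x = x" unfolding hi_def by simp
    obtain c where c: "\<forall>z\<in>{a i..<a (Suc i)}. f z = z + c" using pcs i(1) by blast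
    obtain e where e: "e > 0" "\<forall>t. 0 < t \<and> t < e \<longrightarrow> f (hi x - t) = hi (S x) - t"
      using Sprop[OF x] by blast
    define t where "t = min e (x - a i) / 2"
    have t: "0 < t" "t < e" "t < x - a i" unfolding t_def using e ai by auto
    have "f (x - t) = x - t + c" "f x = x + c" using c t i by auto
    moreover have "f (x - t) = hi (S x) - t" using e t hx by simp
    ultimately have "hi (S x) = f x" by simp
    moreover have "f x < 1" using fin_c[OF x] unfolding circ_def by simp
    moreover have "S x \<in> circ" using Sprop[OF x] by simp
    ultimately show "S x = f x" unfolding hi_def by (auto split: if_splits)
  qed
  have injS: "inj_on S circ"
  proof (rule inj_onI)
    fix x x' assume x: "x \<in> circ" and x': "x' \<in> circ" and eq: "S x = S x'"
    obtain e where e: "e > 0" "\<forall>t. 0 < t \<and> t < e \<longrightarrow> f (hi x - t) = hi (S x) - t"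
      using Sprop[OF x] by blast
    obtain e' where e': "e' > 0" "\<forall>t. 0 < t \<and> t < e' \<longrightarrow> f (hi x' - t) = hi (S x') - t"
      using Sprop[OF x'] by blast
    have h: "0 < hi x" "hi x \<le> 1" "0 < hi x'" "hi x' \<le> 1" using hi_circ x x' by auto
    define t where "t = min (min e e') (min (hi x) (hi x')) / 2"
    have t: "0 < t" "t < e" "t < e'" "t < hi x" "t < hi x'" unfolding t_def using e e' h by auto
    have "f (hi x - t) = f (hi x' - t)" using e e' t eq by simp
    moreover have "hi x - t \<in> circ" "hi x' - t \<in> circ" using t h unfolding circ_def by auto
    ultimately have "hi x - t = hi x' - t" using injf by (meson inj_onD)
    hence "hi x = hi x'" by simp
    thus "x = x'" using x x' unfolding hi_def circ_def by (auto split: if_splits)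
  qed
  have SX: "S ` circ \<subseteq> circ" using Sprop by auto
  have "bij_betw S circ circ" by (rule bij_from_agree[OF bf injS SX finD agree])
  thus ?thesis using finD G agree by blast
qed



lemma germ_inv:
  assumes G: "germ f f S" and bf: "bij_betw f circ circ" and bS: "bij_betw S circ circ"
  shows "germ (inv_into circ f) (inv_into circ f) (inv_into circ S)"
  unfolding germ_def
proof (intro ballI conjI)
  fix y assume y: "y \<in> circ"
  have injf: "inj_on f circ" and fc: "f ` circ = circ" using bf unfolding bij_betw_def by auto
  have injS: "inj_on S circ" and Sc: "S ` circ = circ" using bS unfolding bij_betw_def by auto
  define x where "x = inv_into circ f y"
  have x: "x \<in> circ" "f x = y" unfolding x_def
    by (rule inv_into_into, simp add: fc y, rule f_inv_into_f, simp add: fc y)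
  define x' where "x' = inv_into circ S y"
  have x': "x' \<in> circ" "S x' = y" unfolding x'_def
    by (rule inv_into_into, simp add: Sc y, rule f_inv_into_f, simp add: Sc y)
  show "inv_into circ f y \<in> circ" using x x_def by simp
  show "inv_into circ S y \<in> circ" using x' x'_def by simp
  obtain e where e: "e > 0" "\<forall>t. 0 \<le> t \<and> t < e \<longrightarrow> f (x+t) = f x + t"
    using G x(1) unfolding germ_def by blast
  show "\<exists>e>0. \<forall>t. 0 \<le> t \<and> t < e \<longrightarrow> inv_into circ f (y+t) = inv_into circ f y + t"
  proof (intro exI[of _ "min e (1 - x)"] conjI allI impI)
    show "min e (1 - x) > 0" using e x(1) unfolding circ_def by auto
    fix t assume t: "0 \<le> t \<and> t < min e (1 - x)"
    have xt: "x + t \<in> circ" using t x(1) unfolding circ_def by auto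
    have "f (x+t) = y + t" using e t x(2) by auto
    hence "inv_into circ f (y+t) = x + t" by (rule inv_into_f_eq[OF injf xt])
    thus "inv_into circ f (y+t) = inv_into circ f y + t" using x_def by simp
  qed
  obtain e' where e': "e' > 0" "\<forall>t. 0 < t \<and> t < e' \<longrightarrow> f (hi x' - t) = hi (S x') - t"
    using G x'(1) unfolding germ_def by blast
  have hx': "0 < hi x'" "hi x' \<le> 1" using hi_circ[OF x'(1)] by auto
  show "\<exists>e>0. \<forall>t. 0 < t \<and> t < e \<longrightarrow> inv_into circ f (hi y - t) = hi (inv_into circ S y) - t"
  proof (intro exI[of _ "min e' (hi x')"] conjI allI impI)
    show "min e' (hi x') > 0" using e' hx' by auto
    fix t assume t: "0 < t \<and> t < min e' (hi x')"
    have xt: "hi x' - t \<in> circ" using t hx' unfolding circ_def by auto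
    have "f (hi x' - t) = hi y - t" using e' t x'(2) by auto
    hence "inv_into circ f (hi y - t) = hi x' - t" by (rule inv_into_f_eq[OF injf xt])
    thus "inv_into circ f (hi y - t) = hi (inv_into circ S y) - t" using x'_def by simp
  qed
qed

lemma inv_step:
  assumes b: "bij_betw U X X" and w: "w \<in> X" and x: "x \<in> X"
  shows "inv_into X U w = x \<longleftrightarrow> U x = w"
proof
  have inj: "inj_on U X" and UX: "U ` X = X" using b unfolding bij_betw_def by auto
  show "inv_into X U w = x \<Longrightarrow> U x = w" proof -
    assume "inv_into X U w = x"
    moreover have "U (inv_into X U w) = w" by (rule f_inv_into_f) (simp add: UX w)
    ultimately show "U x = w" by simp
  qed
  show "U x = w \<Longrightarrow> inv_into X U w = x" by (rule inv_into_f_eq[OF inj x])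
qed

lemma inv_into_in: "bij_betw U X X \<Longrightarrow> w \<in> X \<Longrightarrow> inv_into X U w \<in> X"
  by (intro inv_into_into) (auto simp: bij_betw_def)

lemma inv_pow_iff:
  assumes b: "bij_betw U X X"
  shows "x \<in> X \<Longrightarrow> y \<in> X \<Longrightarrow> (inv_into X U ^^ m) y = x \<longleftrightarrow> y = (U^^m) x"
proof (induction m arbitrary: x)
  case 0 thus ?case by auto
next
  case (Suc m)
  have UX: "U ` X \<subseteq> X" using b unfolding bij_betw_def by auto
  have VX: "inv_into X U ` X \<subseteq> X" using inv_into_in[OF b] by auto
  define w where "w = (inv_into X U ^^ m) y"
  have w: "w \<in> X" unfolding w_def using funpow_in[OF VX Suc.prems(2)] .
  have Ux: "U x \<in> X" using UX Suc.prems(1) by auto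
  have "(inv_into X U ^^ Suc m) y = x \<longleftrightarrow> U x = w" using inv_step[OF b w Suc.prems(1)] w_def by simp
  also have "\<dots> \<longleftrightarrow> y = (U^^m) (U x)" using Suc.IH[OF Ux Suc.prems(2)] w_def by auto
  also have "(U^^m) (U x) = (U^^Suc m) x" by (simp add: funpow_Suc_right del: funpow.simps)
  finally show ?case .
qed

lemma card_inv_swap:
  assumes bT: "bij_betw T X X" and bS: "bij_betw S X X"
  shows "card {y\<in>X. (inv_into X S ^^ m) y \<noteq> (inv_into X T ^^ m) y} = card {x\<in>X. (S^^m) x \<noteq> (T^^m) x}"
proof -
  define A where "A = {y\<in>X. (inv_into X S ^^ m) y \<noteq> (inv_into X T ^^ m) y}"
  define B where "B = {x\<in>X. (S^^m) x \<noteq> (T^^m) x}"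
  have TX: "T ` X \<subseteq> X" using bT unfolding bij_betw_def by auto
  have VX: "inv_into X T ` X \<subseteq> X" using inv_into_in[OF bT] by auto
  have WX: "inv_into X S ` X \<subseteq> X" using inv_into_in[OF bS] by auto
  have inj: "inj_on (T^^m) B"
    by (rule inj_on_subset[of _ X]) (use bij_betw_funpow[OF bT] in \<open>auto simp: bij_betw_def B_def\<close>)
  have "(T^^m) ` B = A"
  proof
    show "(T^^m) ` B \<subseteq> A"
    proof
      fix y assume "y \<in> (T^^m) ` B"
      then obtain x where x: "x \<in> B" "y = (T^^m) x" by blast
      have xX: "x \<in> X" and ne: "(S^^m) x \<noteq> (T^^m) x" using x unfolding B_def by auto
      have yX: "y \<in> X" using funpow_in[OF TX xX] x by simp
      have "(inv_into X T ^^ m) y = x" using inv_pow_iff[OF bT xX yX, where m=m] x by simp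
      moreover have "(inv_into X S ^^ m) y \<noteq> x" using inv_pow_iff[OF bS xX yX, where m=m] x ne by simp
      ultimately show "y \<in> A" using yX unfolding A_def by simp
    qed
    show "A \<subseteq> (T^^m) ` B"
    proof
      fix y assume y: "y \<in> A"
      hence yX: "y \<in> X" unfolding A_def by simp
      define x where "x = (inv_into X T ^^ m) y"
      have xX: "x \<in> X" unfolding x_def using funpow_in[OF VX yX] .
      have yx: "y = (T^^m) x" using inv_pow_iff[OF bT xX yX, where m=m] unfolding x_def by simp
      have "(S^^m) x \<noteq> (T^^m) x"
      proof
        assume "(S^^m) x = (T^^m) x"
        hence "(inv_into X S ^^ m) y = x" using inv_pow_iff[OF bS xX yX, where m=m] yx by simp
        thus False using y x_def unfolding A_def by simp
      qed
      thus "y \<in> (T^^m) ` B" using xX yx unfolding B_def by blast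
    qed
  qed
  hence "bij_betw (T^^m) B A" using inj unfolding bij_betw_def by simp
  from bij_betw_same_card[OF this] show ?thesis unfolding A_def B_def by simp
qed

theorem theorem1p1:
  fixes f :: "real \<Rightarrow> real"
  assumes "iet f"
  shows "(\<exists>c>0. \<exists>N::nat. \<forall>n::int. \<bar>n\<bar> \<ge> int N \<longrightarrow> real (d (ipow f n)) \<ge> c * \<bar>real_of_int n\<bar>)
         \<or> (\<exists>B::nat. \<forall>n::int. d (ipow f n) \<le> B)"
proof -
  obtain S D where finD: "finite D" and G: "germ f f S" and bS: "bij_betw S circ circ"
    and agree: "\<forall>x\<in>circ - D. S x = f x"
    using iet_germ[OF assms] by blast
  have bf: "bij_betw f circ circ" using assms unfolding iet_def by simp
  define c where "c m = card {x\<in>circ. (S^^m) x \<noteq> (f^^m) x}" for m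
  have dpos: "d (ipow f (int m)) = c m" for m
  proof -
    have "ipow f (int m) = f^^m" unfolding ipow_def by simp
    moreover have "{x\<in>circ. discont_at (f^^m) x} = {x\<in>circ. (S^^m) x \<noteq> (f^^m) x}"
      using germ_discont[OF germ_pow[OF G]] by blast
    ultimately show ?thesis unfolding d_def c_def by simp
  qed
  have dneg: "d (ipow f (- int m)) = c m" for m
  proof -
    have "ipow f (- int m) = inv_into circ f ^^ m" proof (cases "m = 0")
      case True thus ?thesis unfolding ipow_def by simp
    next
      case False hence "\<not> 0 \<le> - int m" by simp
      thus ?thesis unfolding ipow_def by simp
    qed
    moreover have "{x\<in>circ. discont_at (inv_into circ f ^^ m) x}
        = {x\<in>circ. (inv_into circ S ^^ m) x \<noteq> (inv_into circ f ^^ m) x}"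
      using germ_discont[OF germ_pow[OF germ_inv[OF G bf bS]]] by blast
    ultimately show ?thesis unfolding d_def c_def using card_inv_swap[OF bf bS, of m] by simp
  qed
  have dall: "d (ipow f n) = c (nat \<bar>n\<bar>)" for n
  proof (cases "n \<ge> 0")
    case True
    thus ?thesis using dpos[of "nat n"] by simp
  next
    case False
    hence "- int (nat (-n)) = n" "nat \<bar>n\<bar> = nat (-n)" by auto
    thus ?thesis using dneg[of "nat (-n)"] by simp
  qed
  have "(\<exists>n0\<ge>1. \<forall>n\<ge>2*n0. real n / (2*n0) \<le> c n) \<or> (\<exists>B. \<forall>n. c n \<le> B)"
    using core[OF bf bS finD agree] unfolding c_def by simp
  thus ?thesis
  proof
    assume "\<exists>n0\<ge>1. \<forall>n\<ge>2*n0. real n / (2*n0) \<le> c n"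
    then obtain n0 where n0: "n0 \<ge> 1" "\<forall>n\<ge>2*n0. real n / (2*n0) \<le> c n" by blast
    have "\<forall>n::int. \<bar>n\<bar> \<ge> int (2*n0) \<longrightarrow> real (d (ipow f n)) \<ge> (1 / (2*n0)) * \<bar>real_of_int n\<bar>"
    proof (intro allI impI)
      fix n :: int assume n: "\<bar>n\<bar> \<ge> int (2*n0)"
      hence "nat \<bar>n\<bar> \<ge> 2*n0" by linarith
      hence "real (nat \<bar>n\<bar>) / (2*n0) \<le> c (nat \<bar>n\<bar>)" by (rule n0(2)[rule_format])
      moreover have "real (nat \<bar>n\<bar>) = \<bar>real_of_int n\<bar>" by simp
      ultimately have "\<bar>real_of_int n\<bar> / (2*n0) \<le> c (nat \<bar>n\<bar>)" by simp
      thus "real (d (ipow f n)) \<ge> (1 / (2*n0)) * \<bar>real_of_int n\<bar>" unfolding dall[of n] by simp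
    qed
    moreover have "1 / real (2 * n0) > 0" using n0 by simp
    ultimately have "\<exists>c>0. \<exists>N::nat. \<forall>n::int. \<bar>n\<bar> \<ge> int N \<longrightarrow> real (d (ipow f n)) \<ge> c * \<bar>real_of_int n\<bar>"
      by (intro exI[of _ "1 / real (2 * n0)"] conjI exI[of _ "2*n0"])
    thus ?thesis by (rule disjI1)
  next
    assume "\<exists>B. \<forall>n. c n \<le> B"
    then obtain B where "\<forall>n. c n \<le> B" by blast
    hence "\<forall>n::int. d (ipow f n) \<le> B" unfolding dall by simp
    hence "\<exists>B::nat. \<forall>n::int. d (ipow f n) \<le> B" by (rule exI)
    thus ?thesis by (rule disjI2)
  qed
qed

end
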